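(* Fix integers $1\le i<s\le t\le r$. For $m\ge1$ let $M(m)$ be the maximum of $k^t(\mathcal H)$ over all $s$-graphs $\mathcal H$ with $m$ edges and $\Delta_i(\mathcal H)\le\binom{r-i}{s-i}$. Then \[M(m)=(1-o(1))\,m\frac{\binom{r}{t}}{\binom{r}{s}}\quad\text{as } m\to\infty.\]
   Context: An $s$-graph is a family of $s$-subsets (edges) of a vertex set. For $|I|=i$, $d_{\mathcal H}(I)$ is the number of edges containing $I$ and $\Delta_i(\mathcal H)=\max_{|I|=i}d_{\mathcal H}(I)$. $k^t(\mathcal H)$ is the number of $t$-sets all of whose $s$-subsets are edges. *)

theory Defs
  imports "HOL-Analysis.Analysis" "HOL-Library.Landau_Symbols"
begin

definition is_sgraph :: "nat \<Rightarrow> nat set set \<Rightarrow> bool" where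
  "is_sgraph s H \<longleftrightarrow> finite H \<and> (\<forall>e\<in>H. finite e \<and> card e = s)"

definition deg :: "nat set set \<Rightarrow> nat set \<Rightarrow> nat" where
  "deg H I = card {e\<in>H. I \<subseteq> e}"

definition Delta :: "nat \<Rightarrow> nat set set \<Rightarrow> nat" where
  "Delta i H = Max {deg H I | I. finite I \<and> card I = i}"

definition kt :: "nat \<Rightarrow> nat \<Rightarrow> nat set set \<Rightarrow> nat" where
  "kt s t H = card {T. finite T \<and> card T = t \<and> (\<forall>S. S \<subseteq> T \<and> card S = s \<longrightarrow> S \<in> H)}"

definition Mmax :: "nat \<Rightarrow> nat \<Rightarrow> nat \<Rightarrow> nat \<Rightarrow> nat \<Rightarrow> nat" where
  "Mmax i s t r m = Max {kt s t H | H. is_sgraph s H \<and> card H = m \<and>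
                              Delta i H \<le> (r - i) choose (s - i)}"

end

theory Submission
  imports Defs
begin

definition cl :: "nat set \<Rightarrow> nat \<Rightarrow> nat \<Rightarrow> nat set set \<Rightarrow> nat set set" where
  "cl V s t G = {T. T \<subseteq> V \<and> card T = t \<and> (\<forall>S. S \<subseteq> T \<and> card S = s \<longrightarrow> S \<in> G)}"

lemma finite_cl: "finite V \<Longrightarrow> finite (cl V s t G)"
  by (rule finite_subset[of _ "Pow V"]) (auto simp: cl_def)

lemma card_swap:
  assumes "finite A" "finite B"
  shows "(\<Sum>a\<in>A. card {b\<in>B. P a b}) = (\<Sum>b\<in>B. card {a\<in>A. P a b})"
proof -
  have "\<And>a. card {b\<in>B. P a b} = (\<Sum>b\<in>B. if P a b then 1 else 0)"
    using assms by (simp add: sum.If_cases Int_def conj_commute)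
  moreover have "\<And>b. card {a\<in>A. P a b} = (\<Sum>a\<in>A. if P a b then 1 else 0)"
    using assms by (simp add: sum.If_cases Int_def conj_commute)
  ultimately show ?thesis using sum.swap by simp
qed

lemma binom_ineq1:
  assumes "e \<le> R" "1 \<le> t"
  shows "(e choose t) * R \<le> e * (R choose t)"
proof (cases e)
  case 0 then show ?thesis using assms by simp
next
  case (Suc e')
  then obtain R' where R: "R = Suc R'" using assms by (cases R) auto
  obtain t' where t: "t = Suc t'" using assms by (cases t) auto
  have m: "(e' choose t') \<le> (R' choose t')" using assms Suc R binomial_right_mono by simp
  have "(e choose t) * R * t = e * (e' choose t') * R"
    using Suc_times_binomial_eq[of e' t'] Suc t by (simp add: algebra_simps)
  also have "\<dots> \<le> e * (R' choose t') * R" using m by simp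
  also have "\<dots> = e * (R choose t) * t"
    using Suc_times_binomial_eq[of R' t'] R t by (simp add: algebra_simps)
  finally have "(e choose t) * R * t \<le> e * (R choose t) * t" .
  then show ?thesis using t by (metis mult_le_cancel2 zero_less_Suc)
qed

lemma LK_base:
  assumes "finite V" "finite G" "\<forall>S\<in>G. card S = 1" "1 \<le> t" "card G \<le> R choose 1"
  shows "card (cl V 1 t G) * (R choose 1) \<le> card G * (R choose t)"
proof -
  define U where "U = {x. {x} \<in> G}"
  have GU: "G = (\<lambda>x. {x}) ` U" using assms(3) unfolding U_def
    by (auto simp: card_1_singleton_iff)
  have cU: "card G = card U" unfolding GU by (rule card_image) (auto simp: inj_on_def)
  have fU: "finite U" using GU assms(2) finite_imageD inj_on_def by (metis singleton_inject)
  have "cl V 1 t G = {T. T \<subseteq> V \<inter> U \<and> card T = t}"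
    unfolding cl_def U_def
    by (auto simp: card_1_singleton_iff)
  hence "card (cl V 1 t G) = card (V \<inter> U) choose t" using n_subsets[of "V \<inter> U" t] assms(1) by simp
  also have "\<dots> \<le> card U choose t" by (rule binomial_right_mono) (simp add: card_mono fU)
  finally have "card (cl V 1 t G) * R \<le> (card G choose t) * R" using cU by simp
  also have "\<dots> \<le> card G * (R choose t)" using binom_ineq1 assms by simp
  finally show ?thesis by simp
qed

lemma cl_sub_step:
  assumes "v \<in> V" "finite V"
  shows "card {T\<in>cl V s (Suc t') G. v \<in> T} \<le> card (cl V s t' {S\<in>G. v \<notin> S})"
proof -
  have "(\<lambda>T. T - {v}) ` {T\<in>cl V s (Suc t') G. v \<in> T} \<subseteq> cl V s t' {S\<in>G. v \<notin> S}"
  proof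
    fix X assume "X \<in> (\<lambda>T. T - {v}) ` {T\<in>cl V s (Suc t') G. v \<in> T}"
    then obtain T where T: "T \<in> cl V s (Suc t') G" "v \<in> T" "X = T - {v}" by auto
    have fT: "finite T" using T assms finite_subset unfolding cl_def by blast
    show "X \<in> cl V s t' {S\<in>G. v \<notin> S}"
      using T fT unfolding cl_def by auto
  qed
  moreover have "inj_on (\<lambda>T. T - {v}) {T\<in>cl V s (Suc t') G. v \<in> T}"
    by (rule inj_onI) (metis (no_types, lifting) insert_Diff mem_Collect_eq)
  ultimately show ?thesis
    by (metis (no_types, lifting) assms(2) card_image card_mono finite_cl)
qed

lemma cl_sub_link:
  assumes "v \<in> V" "finite V"
  shows "card {T\<in>cl V (Suc s') (Suc t') G. v \<in> T}
     \<le> card (cl V s' t' ((\<lambda>S. S - {v}) ` {S\<in>G. v \<in> S}))"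
proof -
  have "(\<lambda>T. T - {v}) ` {T\<in>cl V (Suc s') (Suc t') G. v \<in> T} \<subseteq> cl V s' t' ((\<lambda>S. S - {v}) ` {S\<in>G. v \<in> S})"
  proof
    fix X assume "X \<in> (\<lambda>T. T - {v}) ` {T\<in>cl V (Suc s') (Suc t') G. v \<in> T}"
    then obtain T where T: "T \<in> cl V (Suc s') (Suc t') G" "v \<in> T" "X = T - {v}" by auto
    have fT: "finite T" using T assms finite_subset unfolding cl_def by blast
    have "S' \<in> (\<lambda>S. S - {v}) ` {S\<in>G. v \<in> S}" if "S' \<subseteq> X" "card S' = s'" for S'
    proof -
      have fS: "finite S'" "v \<notin> S'" using that T fT finite_subset by auto
      have "insert v S' \<subseteq> T" "card (insert v S') = Suc s'"
        using that T fS by auto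
      hence "insert v S' \<in> G" using T(1) unfolding cl_def by blast
      moreover have "S' = insert v S' - {v}" using that T by auto
      ultimately show ?thesis by blast
    qed
    then show "X \<in> cl V s' t' ((\<lambda>S. S - {v}) ` {S\<in>G. v \<in> S})"
      using T fT unfolding cl_def by auto
  qed
  moreover have "inj_on (\<lambda>T. T - {v}) {T\<in>cl V (Suc s') (Suc t') G. v \<in> T}"
    by (rule inj_onI) (metis (no_types, lifting) insert_Diff mem_Collect_eq)
  ultimately show ?thesis
    by (metis (no_types, lifting) assms(2) card_image card_mono finite_cl)
qed

lemma card_link:
  "card ((\<lambda>S. S - {v}) ` {S\<in>G. v \<in> S}) = card {S\<in>G. v \<in> S}"
  by (rule card_image, rule inj_onI) (metis (no_types, lifting) insert_Diff mem_Collect_eq)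

lemma card_split_filter:
  assumes "finite A"
  shows "card A = card {x\<in>A. \<not> P x} + card {x\<in>A. P x}"
proof -
  have "A = {x\<in>A. \<not> P x} \<union> {x\<in>A. P x}" by auto
  hence "card A = card ({x\<in>A. \<not> P x} \<union> {x\<in>A. P x})" by simp
  also have "\<dots> = card {x\<in>A. \<not> P x} + card {x\<in>A. P x}"
    by (rule card_Un_disjoint) (use assms in auto)
  finally show ?thesis .
qed

lemma aux_cancel:
  fixes x y T S c c' Rr C1 C2 :: nat
  assumes h: "x * T * c * Rr \<le> y * S * c' * Rr" and e1: "Rr * c = C1 * S" and e2: "Rr * c' = C2 * T"
    and "0 < S" "0 < T"
  shows "x * C1 \<le> y * C2"
proof -
  have "x * T * c * Rr = x * T * (Rr * c)" by (simp add: ac_simps)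
  also have "\<dots> = (x * C1) * (S * T)" using e1 by (simp add: ac_simps)
  finally have l: "x * T * c * Rr = (x * C1) * (S * T)" .
  have "y * S * c' * Rr = y * S * (Rr * c')" by (simp add: ac_simps)
  also have "\<dots> = (y * C2) * (S * T)" using e2 by (simp add: ac_simps)
  finally have r: "y * S * c' * Rr = (y * C2) * (S * T)" .
  from h l r have "(x * C1) * (S * T) \<le> (y * C2) * (S * T)" by simp
  with assms show ?thesis by simp
qed

lemma LK_step:
  assumes fV: "finite V" and s'1: "1 \<le> s'"
  and IHs: "\<And>t R G. finite G \<Longrightarrow> \<forall>S\<in>G. card S = s' \<Longrightarrow> s' \<le> t \<Longrightarrow> card G \<le> R choose s'
     \<Longrightarrow> card (cl V s' t G) * (R choose s') \<le> card G * (R choose t)"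
  shows "finite G \<Longrightarrow> \<forall>S\<in>G. card S = Suc s' \<Longrightarrow> Suc s' \<le> t \<Longrightarrow> card G \<le> R choose Suc s'
     \<Longrightarrow> card (cl V (Suc s') t G) * (R choose Suc s') \<le> card G * (R choose t)"
proof (induction t arbitrary: R G)
  case 0 then show ?case by simp
next
  case (Suc t')
  show ?case
  proof (cases "Suc t' = Suc s'")
    case True
    have "cl V (Suc s') (Suc t') G \<subseteq> G" using True unfolding cl_def by auto
    hence "card (cl V (Suc s') (Suc t') G) \<le> card G" by (rule card_mono[OF Suc.prems(1)])
    then show ?thesis using True by simp
  next
    case False
    hence st: "Suc s' \<le> t'" using Suc.prems by simp
    show ?thesis
    proof (cases R)
      case 0 then show ?thesis by simp
    next
      case (Suc R')
      define Cl where "Cl = cl V (Suc s') (Suc t') G"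
      define K where "K v = card {T\<in>Cl. v\<in>T}" for v
      define d where "d v = card {S\<in>G. v\<in>S}" for v
      have fCl: "finite Cl" using finite_cl fV Cl_def by simp
      have vert: "K v * (R' choose s') \<le> d v * (R' choose t')" if vV: "v\<in>V" for v
      proof (cases "d v \<le> R' choose s'")
        case True
        let ?L = "(\<lambda>S. S - {v}) ` {S\<in>G. v\<in>S}"
        have a: "K v \<le> card (cl V s' t' ?L)" using cl_sub_link[OF vV fV] K_def Cl_def by simp
        have "\<forall>S\<in>?L. card S = s'"
        proof
          fix S assume "S \<in> ?L"
          then obtain S0 where "S0 \<in> G" "v \<in> S0" "S = S0 - {v}" by auto
          moreover have "card S0 = Suc s'" using \<open>S0 \<in> G\<close> Suc.prems(2) by blast
          ultimately show "card S = s'" by simp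
        qed
        hence b: "card (cl V s' t' ?L) * (R' choose s') \<le> card ?L * (R' choose t')"
          using IHs[of ?L t' R'] Suc.prems(1) st True card_link[of v G] d_def by simp
        have "K v * (R' choose s') \<le> card (cl V s' t' ?L) * (R' choose s')" using a by simp
        also have "\<dots> \<le> card ?L * (R' choose t')" by (rule b)
        also have "\<dots> = d v * (R' choose t')" using card_link[of v G] d_def by simp
        finally show ?thesis .
      next
        case False
        let ?G = "{S\<in>G. v\<notin>S}"
        have a: "K v \<le> card (cl V (Suc s') t' ?G)" using cl_sub_step[OF vV fV] K_def Cl_def by simp
        have part: "card G = card ?G + d v" using card_split_filter[OF Suc.prems(1), of "\<lambda>S. v \<in> S"] d_def by simp
        have pas: "R choose Suc s' = (R' choose s') + (R' choose Suc s')" using Suc by simp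
        hence lt: "card ?G < R' choose Suc s'" using part False Suc.prems(4) by linarith
        have IH: "card (cl V (Suc s') t' ?G) * (R' choose Suc s') \<le> card ?G * (R' choose t')"
          by (rule Suc.IH) (use Suc.prems st lt in auto)
        also have "card ?G * (R' choose t') \<le> (R' choose Suc s') * (R' choose t')"
          using lt by simp
        finally have "card (cl V (Suc s') t' ?G) * (R' choose Suc s') \<le> (R' choose t') * (R' choose Suc s')"
          by (simp add: mult.commute)
        moreover have "0 < R' choose Suc s'" using lt by linarith
        ultimately have "card (cl V (Suc s') t' ?G) \<le> R' choose t'" by simp
        hence "K v \<le> R' choose t'" using a by simp
        hence "K v * (R' choose s') \<le> (R' choose t') * (R' choose s')" by simp
        also have "\<dots> \<le> (R' choose t') * d v" using False by simp
        finally show ?thesis by (simp add: mult.commute)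
      qed
      have S1: "(\<Sum>v\<in>V. K v) = card Cl * Suc t'"
      proof -
        have "(\<Sum>v\<in>V. K v) = (\<Sum>T\<in>Cl. card {v\<in>V. v\<in>T})"
          unfolding K_def by (rule card_swap[OF fV fCl])
        also have "\<dots> = (\<Sum>T\<in>Cl. Suc t')"
        proof (rule sum.cong)
          fix T assume "T \<in> Cl"
          hence "{v\<in>V. v\<in>T} = T" "card T = Suc t'" unfolding Cl_def cl_def by auto
          thus "card {v\<in>V. v\<in>T} = Suc t'" by simp
        qed simp
        finally show ?thesis by simp
      qed
      have S2: "(\<Sum>v\<in>V. d v) \<le> card G * Suc s'"
      proof -
        have "(\<Sum>v\<in>V. d v) = (\<Sum>S\<in>G. card {v\<in>V. v\<in>S})"
          unfolding d_def by (rule card_swap[OF fV Suc.prems(1)])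
        also have "\<dots> \<le> (\<Sum>S\<in>G. Suc s')"
        proof (rule sum_mono)
          fix S assume "S \<in> G"
          hence "card S = Suc s'" using Suc.prems(2) by blast
          moreover have "finite S" using \<open>card S = Suc s'\<close> card.infinite by fastforce
          ultimately show "card {v\<in>V. v\<in>S} \<le> Suc s'" by (metis (no_types, lifting) card_mono mem_Collect_eq subsetI)
        qed
        finally show ?thesis by simp
      qed
      have "(\<Sum>v\<in>V. K v * (R' choose s')) \<le> (\<Sum>v\<in>V. d v * (R' choose t'))"
        by (rule sum_mono) (rule vert)
      hence "(\<Sum>v\<in>V. K v) * (R' choose s') \<le> (\<Sum>v\<in>V. d v) * (R' choose t')"
        by (simp add: sum_distrib_right)
      also have "(\<Sum>v\<in>V. d v) * (R' choose t') \<le> card G * Suc s' * (R' choose t')"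
        using S2 by simp
      finally have "card Cl * Suc t' * (R' choose s') \<le> card G * Suc s' * (R' choose t')"
        using S1 by simp
      hence h: "card Cl * Suc t' * (R' choose s') * Suc R' \<le> card G * Suc s' * (R' choose t') * Suc R'"
        by (rule mult_le_mono1)
      have e1: "Suc R' * (R' choose s') = (R choose Suc s') * Suc s'"
        using Suc_times_binomial_eq[of R' s'] Suc by simp
      have e2: "Suc R' * (R' choose t') = (R choose Suc t') * Suc t'"
        using Suc_times_binomial_eq[of R' t'] Suc by simp
      have "card Cl * (R choose Suc s') \<le> card G * (R choose Suc t')"
        using aux_cancel[OF h e1 e2] by simp
      then show ?thesis unfolding Cl_def .
    qed
  qed
qed

lemma LK:
  assumes "finite V"
  shows "finite G \<Longrightarrow> \<forall>S\<in>G. card S = s \<Longrightarrow> 1 \<le> s \<Longrightarrow> s \<le> t \<Longrightarrow> card G \<le> R choose s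
     \<Longrightarrow> card (cl V s t G) * (R choose s) \<le> card G * (R choose t)"
proof (induction s arbitrary: t R G)
  case 0 then show ?case by simp
next
  case (Suc s')
  show ?case
  proof (cases "s' = 0")
    case True then show ?thesis using LK_base[OF assms, of G t R] Suc.prems by simp
  next
    case False
    have s1: "1 \<le> s'" using False by simp
    have IH: "\<And>t R G. finite G \<Longrightarrow> \<forall>S\<in>G. card S = s' \<Longrightarrow> s' \<le> t \<Longrightarrow> card G \<le> R choose s'
     \<Longrightarrow> card (cl V s' t G) * (R choose s') \<le> card G * (R choose t)"
      using Suc.IH s1 by blast
    show ?thesis using LK_step[OF assms s1 IH, of G t R] Suc.prems by blast
  qed
qed

lemma cl_sub_linkI:
  assumes "finite V" "finite I" "card I = i" "i \<le> s"
  shows "card {T\<in>cl V s t G. I \<subseteq> T} \<le> card (cl V (s - i) (t - i) ((\<lambda>S. S - I) ` {S\<in>G. I \<subseteq> S}))"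
proof -
  have "(\<lambda>T. T - I) ` {T\<in>cl V s t G. I \<subseteq> T} \<subseteq> cl V (s - i) (t - i) ((\<lambda>S. S - I) ` {S\<in>G. I \<subseteq> S})"
  proof
    fix X assume "X \<in> (\<lambda>T. T - I) ` {T\<in>cl V s t G. I \<subseteq> T}"
    then obtain T where T: "T \<in> cl V s t G" "I \<subseteq> T" "X = T - I" by auto
    have fT: "finite T" using T assms finite_subset unfolding cl_def by blast
    have "card T = t" using T(1) unfolding cl_def by simp
    hence cX: "card X = t - i" using T fT assms by (simp add: card_Diff_subset)
    have "S' \<in> (\<lambda>S. S - I) ` {S\<in>G. I \<subseteq> S}" if "S' \<subseteq> X" "card S' = s - i" for S'
    proof -
      have fS: "finite S'" "S' \<inter> I = {}" using that T fT finite_subset[of S' T] by auto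
      have "S' \<union> I \<subseteq> T" using that T by auto
      moreover have "card (S' \<union> I) = s" using fS assms that card_Un_disjoint[of S' I] by simp
      ultimately have "S' \<union> I \<in> G" using T(1) unfolding cl_def by blast
      moreover have "S' = (S' \<union> I) - I" using fS by auto
      ultimately show ?thesis by blast
    qed
    then show "X \<in> cl V (s - i) (t - i) ((\<lambda>S. S - I) ` {S\<in>G. I \<subseteq> S})"
      using T cX unfolding cl_def by auto
  qed
  moreover have inj: "inj_on (\<lambda>T. T - I) {T\<in>cl V s t G. I \<subseteq> T}"
    by (rule inj_onI) (metis (no_types, lifting) Diff_partition mem_Collect_eq)
  ultimately have "card ((\<lambda>T. T - I) ` {T\<in>cl V s t G. I \<subseteq> T}) \<le> card (cl V (s - i) (t - i) ((\<lambda>S. S - I) ` {S\<in>G. I \<subseteq> S}))"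
    by (intro card_mono finite_cl assms(1))
  thus ?thesis using card_image[OF inj] by simp
qed

lemma card_linkI:
  "card ((\<lambda>S. S - I) ` {S\<in>G. I \<subseteq> S}) = card {S\<in>G. I \<subseteq> S}"
  by (rule card_image, rule inj_onI) (metis (no_types, lifting) Diff_partition mem_Collect_eq)

lemma kt_set_eq:
  assumes "is_sgraph s H" "1 \<le> s" "s \<le> t"
  shows "{T. finite T \<and> card T = t \<and> (\<forall>S. S \<subseteq> T \<and> card S = s \<longrightarrow> S \<in> H)} = cl (\<Union>H) s t H"
  proof
    show "{T. finite T \<and> card T = t \<and> (\<forall>S. S \<subseteq> T \<and> card S = s \<longrightarrow> S \<in> H)} \<subseteq> cl (\<Union>H) s t H"
    proof
      fix T assume T: "T \<in> {T. finite T \<and> card T = t \<and> (\<forall>S. S \<subseteq> T \<and> card S = s \<longrightarrow> S \<in> H)}"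
      have "T \<subseteq> \<Union>H"
      proof
        fix x assume x: "x \<in> T"
        have "s - 1 \<le> card (T - {x})" using T x assms by simp
        then obtain S0 where S0: "S0 \<subseteq> T - {x}" "card S0 = s - 1" "finite S0"
          by (rule obtain_subset_with_card_n)
        have "x \<notin> S0" using S0 by auto
        hence "insert x S0 \<subseteq> T" "card (insert x S0) = s" using S0 x assms by auto
        hence "insert x S0 \<in> H" using T by blast
        thus "x \<in> \<Union>H" by blast
      qed
      thus "T \<in> cl (\<Union>H) s t H" using T unfolding cl_def by auto
    qed
  next
    have fV: "finite (\<Union>H)" using assms(1) unfolding is_sgraph_def by auto
    show "cl (\<Union>H) s t H \<subseteq> {T. finite T \<and> card T = t \<and> (\<forall>S. S \<subseteq> T \<and> card S = s \<longrightarrow> S \<in> H)}"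
      using fV finite_subset unfolding cl_def by auto
  qed

lemma kt_eq_cl:
  assumes "is_sgraph s H" "1 \<le> s" "s \<le> t"
  shows "kt s t H = card (cl (\<Union>H) s t H)"
  unfolding kt_def using kt_set_eq[OF assms] by simp

lemma deg_le_Delta:
  assumes "finite H" "finite I" "card I = i"
  shows "deg H I \<le> Delta i H"
proof -
  have "{deg H I | I. finite I \<and> card I = i} \<subseteq> {0..card H}"
    unfolding deg_def using assms(1) by (auto intro: card_mono)
  hence "finite {deg H I | I. finite I \<and> card I = i}" using finite_subset by blast
  thus ?thesis unfolding Delta_def by (rule Max_ge) (use assms in auto)
qed

lemma upper:
  assumes "1 \<le> i" "i < s" "s \<le> t" "t \<le> r" and H: "is_sgraph s H"
    and D: "Delta i H \<le> (r - i) choose (s - i)"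
  shows "kt s t H * (r choose s) \<le> card H * (r choose t)"
proof -
  define V where "V = \<Union>H"
  have fH: "finite H" using H unfolding is_sgraph_def by auto
  have fV: "finite V" using H unfolding is_sgraph_def V_def by auto
  have cS: "\<And>S. S \<in> H \<Longrightarrow> card S = s \<and> finite S" using H unfolding is_sgraph_def by auto
  define Cl where "Cl = cl V s t H"
  have fCl: "finite Cl" using finite_cl[OF fV] Cl_def by simp
  have kt: "kt s t H = card Cl" using kt_eq_cl[OF H] assms Cl_def V_def by simp
  define P where "P = {I. I \<subseteq> V \<and> card I = i}"
  have fP: "finite P" unfolding P_def using fV by (simp add: finite_subset)
  define c where "c I = card {T\<in>Cl. I \<subseteq> T}" for I
  have loc: "c I * ((r - i) choose (s - i)) \<le> deg H I * ((r - i) choose (t - i))" if IP: "I \<in> P" for I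
  proof -
    have fI: "finite I" "card I = i" using IP fV finite_subset unfolding P_def by auto
    let ?L = "(\<lambda>S. S - I) ` {S\<in>H. I \<subseteq> S}"
    have a: "c I \<le> card (cl V (s - i) (t - i) ?L)"
      using cl_sub_linkI[OF fV fI, of s t H] assms unfolding c_def Cl_def by simp
    have cL: "card ?L = deg H I" using card_linkI[of I H] unfolding deg_def by simp
    have "deg H I \<le> (r - i) choose (s - i)" using deg_le_Delta[OF fH fI] D by simp
    moreover have "\<forall>S\<in>?L. card S = s - i"
    proof
      fix S assume "S \<in> ?L"
      then obtain S0 where "S0 \<in> H" "I \<subseteq> S0" "S = S0 - I" by auto
      thus "card S = s - i" using cS[of S0] fI by (simp add: card_Diff_subset)
    qed
    ultimately have b: "card (cl V (s - i) (t - i) ?L) * ((r - i) choose (s - i)) \<le> card ?L * ((r - i) choose (t - i))"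
      using LK[OF fV, of ?L "s - i" "t - i" "r - i"] fH assms cL by simp
    have "c I * ((r - i) choose (s - i)) \<le> card (cl V (s - i) (t - i) ?L) * ((r - i) choose (s - i))"
      using a by simp
    also have "\<dots> \<le> deg H I * ((r - i) choose (t - i))" using b cL by simp
    finally show ?thesis .
  qed
  have S1: "(\<Sum>I\<in>P. c I) = card Cl * (t choose i)"
  proof -
    have "(\<Sum>I\<in>P. c I) = (\<Sum>T\<in>Cl. card {I\<in>P. I \<subseteq> T})"
      unfolding c_def by (rule card_swap[OF fP fCl])
    also have "\<dots> = (\<Sum>T\<in>Cl. t choose i)"
    proof (rule sum.cong)
      fix T assume T: "T \<in> Cl"
      hence TV: "T \<subseteq> V" "card T = t" unfolding Cl_def cl_def by auto
      hence "{I\<in>P. I \<subseteq> T} = {I. I \<subseteq> T \<and> card I = i}" unfolding P_def by auto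
      moreover have "finite T" using TV fV finite_subset by auto
      ultimately show "card {I\<in>P. I \<subseteq> T} = t choose i" using n_subsets[of T i] TV by simp
    qed simp
    finally show ?thesis by simp
  qed
  have S2: "(\<Sum>I\<in>P. deg H I) = card H * (s choose i)"
  proof -
    have "(\<Sum>I\<in>P. deg H I) = (\<Sum>S\<in>H. card {I\<in>P. I \<subseteq> S})"
      unfolding deg_def by (rule card_swap[OF fP fH])
    also have "\<dots> = (\<Sum>S\<in>H. s choose i)"
    proof (rule sum.cong)
      fix S assume S: "S \<in> H"
      hence "S \<subseteq> V" unfolding V_def by auto
      hence "{I\<in>P. I \<subseteq> S} = {I. I \<subseteq> S \<and> card I = i}" unfolding P_def by auto
      thus "card {I\<in>P. I \<subseteq> S} = s choose i" using n_subsets[of S i] cS[OF S] by simp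
    qed simp
    finally show ?thesis by simp
  qed
  have "(\<Sum>I\<in>P. c I * ((r - i) choose (s - i))) \<le> (\<Sum>I\<in>P. deg H I * ((r - i) choose (t - i)))"
    by (rule sum_mono) (rule loc)
  hence "(\<Sum>I\<in>P. c I) * ((r - i) choose (s - i)) \<le> (\<Sum>I\<in>P. deg H I) * ((r - i) choose (t - i))"
    by (simp add: sum_distrib_right)
  hence "card Cl * (t choose i) * ((r - i) choose (s - i)) \<le> card H * (s choose i) * ((r - i) choose (t - i))"
    using S1 S2 by simp
  hence h: "card Cl * (t choose i) * ((r - i) choose (s - i)) * (r choose i) \<le> card H * (s choose i) * ((r - i) choose (t - i)) * (r choose i)"
    by (rule mult_le_mono1)
  have e1: "(r choose i) * ((r - i) choose (s - i)) = (r choose s) * (s choose i)"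
    using choose_mult[of i s r] assms by simp
  have e2: "(r choose i) * ((r - i) choose (t - i)) = (r choose t) * (t choose i)"
    using choose_mult[of i t r] assms by simp
  have "card Cl * (r choose s) \<le> card H * (r choose t)"
    using aux_cancel[OF h e1 e2] assms by simp
  thus ?thesis using kt by simp
qed

locale blocks =
  fixes J :: "nat set" and B :: "nat \<Rightarrow> nat set" and r s :: nat
  assumes fJ: "finite J" and fB: "\<And>j. j \<in> J \<Longrightarrow> finite (B j)"
    and disj: "\<And>j j'. j \<in> J \<Longrightarrow> j' \<in> J \<Longrightarrow> j \<noteq> j' \<Longrightarrow> B j \<inter> B j' = {}"
    and cB: "\<And>j. j \<in> J \<Longrightarrow> card (B j) \<le> r"
    and s1: "1 \<le> s"
begin

definition HB :: "nat set set" where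
  "HB = (\<Union>j\<in>J. {S. S \<subseteq> B j \<and> card S = s})"

lemma HB_sgraph: "is_sgraph s HB"
proof -
  have "finite {S. S \<subseteq> B j \<and> card S = s}" if "j \<in> J" for j
    using fB[OF that] by (rule finite_subset[rotated, OF finite_Pow_iff[THEN iffD2]]) auto
  hence "finite HB" unfolding HB_def using fJ by blast
  moreover have "\<forall>e\<in>HB. finite e \<and> card e = s" unfolding HB_def using fB finite_subset by blast
  ultimately show ?thesis unfolding is_sgraph_def by simp
qed

lemma card_HB: "card HB = (\<Sum>j\<in>J. card (B j) choose s)"
proof -
  have "card HB = (\<Sum>j\<in>J. card {S. S \<subseteq> B j \<and> card S = s})"
    unfolding HB_def
  proof (rule card_UN_disjoint[OF fJ])
    show "\<forall>j\<in>J. finite {S. S \<subseteq> B j \<and> card S = s}"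
      using fB by (auto intro: finite_subset[rotated, OF finite_Pow_iff[THEN iffD2]])
    show "\<forall>j\<in>J. \<forall>j'\<in>J. j \<noteq> j' \<longrightarrow> {S. S \<subseteq> B j \<and> card S = s} \<inter> {S. S \<subseteq> B j' \<and> card S = s} = {}"
    proof (intro ballI impI)
      fix j j' assume jj: "j \<in> J" "j' \<in> J" "j \<noteq> j'"
      show "{S. S \<subseteq> B j \<and> card S = s} \<inter> {S. S \<subseteq> B j' \<and> card S = s} = {}"
      proof (rule ccontr)
        assume "{S. S \<subseteq> B j \<and> card S = s} \<inter> {S. S \<subseteq> B j' \<and> card S = s} \<noteq> {}"
        then obtain S where "S \<subseteq> B j" "S \<subseteq> B j'" "card S = s" by auto
        hence "S = {}" using disj[OF jj] by auto
        thus False using \<open>card S = s\<close> s1 by simp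
      qed
    qed
  qed
  also have "\<dots> = (\<Sum>j\<in>J. card (B j) choose s)"
    by (rule sum.cong) (use fB n_subsets in auto)
  finally show ?thesis .
qed

lemma deg_HB:
  assumes I: "finite I" "card I = i" "1 \<le> i" "i \<le> s"
  shows "deg HB I \<le> (r - i) choose (s - i)"
proof -
  obtain x where x: "x \<in> I" using I by fastforce
  show ?thesis
  proof (cases "\<exists>j\<in>J. x \<in> B j")
    case False
    hence "{e\<in>HB. I \<subseteq> e} = {}" unfolding HB_def using x by auto
    thus ?thesis unfolding deg_def by (metis card.empty zero_le)
  next
    case True
    then obtain j where j: "j \<in> J" "x \<in> B j" by blast
    have sub: "{e\<in>HB. I \<subseteq> e} \<subseteq> {S. S \<subseteq> B j \<and> card S = s \<and> I \<subseteq> S}"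
    proof
      fix e assume "e \<in> {e\<in>HB. I \<subseteq> e}"
      then obtain j' where j': "j' \<in> J" "e \<subseteq> B j'" "card e = s" "I \<subseteq> e" unfolding HB_def by auto
      have "j' = j" using disj[OF j'(1) j(1)] j x j' by blast
      thus "e \<in> {S. S \<subseteq> B j \<and> card S = s \<and> I \<subseteq> S}" using j' by auto
    qed
    show ?thesis
    proof (cases "I \<subseteq> B j")
      case False
      hence "{e\<in>HB. I \<subseteq> e} = {}" using sub by auto
      thus ?thesis unfolding deg_def by (metis card.empty zero_le)
    next
      case True
      have "{S. S \<subseteq> B j \<and> card S = s \<and> I \<subseteq> S} \<subseteq> (\<lambda>S'. S' \<union> I) ` {S'. S' \<subseteq> B j - I \<and> card S' = s - i}"
      proof
        fix S assume S: "S \<in> {S. S \<subseteq> B j \<and> card S = s \<and> I \<subseteq> S}"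
        have "finite S" using S fB[OF j(1)] finite_subset by blast
        hence "card (S - I) = s - i" using S I by (simp add: card_Diff_subset)
        moreover have "S = (S - I) \<union> I" using S by auto
        moreover have "S - I \<subseteq> B j - I" using S by auto
        ultimately show "S \<in> (\<lambda>S'. S' \<union> I) ` {S'. S' \<subseteq> B j - I \<and> card S' = s - i}" by blast
      qed
      hence "card {S. S \<subseteq> B j \<and> card S = s \<and> I \<subseteq> S} \<le> card ((\<lambda>S'. S' \<union> I) ` {S'. S' \<subseteq> B j - I \<and> card S' = s - i})"
        by (intro card_mono finite_imageI) (use fB[OF j(1)] in \<open>auto intro: finite_subset[rotated, OF finite_Pow_iff[THEN iffD2]]\<close>)
      also have "\<dots> \<le> card {S'. S' \<subseteq> B j - I \<and> card S' = s - i}" by (rule card_image_le) (use fB[OF j(1)] in \<open>auto intro: finite_subset[rotated, OF finite_Pow_iff[THEN iffD2]]\<close>)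
      also have "\<dots> = card (B j - I) choose (s - i)" using n_subsets[of "B j - I" "s - i"] fB[OF j(1)] by simp
      also have "\<dots> \<le> (r - i) choose (s - i)"
        by (rule binomial_right_mono) (use True I cB[OF j(1)] fB[OF j(1)] in \<open>simp add: card_Diff_subset\<close>)
      finally have "card {S. S \<subseteq> B j \<and> card S = s \<and> I \<subseteq> S} \<le> (r - i) choose (s - i)" .
      moreover have "card {e\<in>HB. I \<subseteq> e} \<le> card {S. S \<subseteq> B j \<and> card S = s \<and> I \<subseteq> S}"
        by (rule card_mono[OF _ sub]) (use fB[OF j(1)] in \<open>auto intro: finite_subset[rotated, OF finite_Pow_iff[THEN iffD2]]\<close>)
      ultimately show ?thesis unfolding deg_def by simp
    qed
  qed
qed

lemma Delta_HB:
  assumes "1 \<le> i" "i \<le> s"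
  shows "Delta i HB \<le> (r - i) choose (s - i)"
proof -
  have fH: "finite HB" using HB_sgraph unfolding is_sgraph_def by simp
  have "{deg HB I | I. finite I \<and> card I = i} \<subseteq> {0..card HB}"
    unfolding deg_def using fH by (auto intro: card_mono)
  hence fin: "finite {deg HB I | I. finite I \<and> card I = i}" using finite_subset by blast
  have ne: "{deg HB I | I. finite I \<and> card I = i} \<noteq> {}"
    by (rule ex_in_conv[THEN iffD1]) (rule exI[of _ "deg HB {0..<i}"], auto)
  show ?thesis unfolding Delta_def using deg_HB assms
    by (subst Max_le_iff[OF fin ne]) auto
qed

lemma kt_HB:
  assumes "s \<le> t"
  shows "(\<Sum>j\<in>J. card (B j) choose t) \<le> kt s t HB"
proof -
  let ?K = "{T. finite T \<and> card T = t \<and> (\<forall>S. S \<subseteq> T \<and> card S = s \<longrightarrow> S \<in> HB)}"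
  have fK: "finite ?K" using kt_set_eq[OF HB_sgraph s1 assms] finite_cl HB_sgraph
    unfolding is_sgraph_def by auto
  have "card (\<Union>j\<in>J. {T. T \<subseteq> B j \<and> card T = t}) = (\<Sum>j\<in>J. card {T. T \<subseteq> B j \<and> card T = t})"
  proof (rule card_UN_disjoint[OF fJ])
    show "\<forall>j\<in>J. finite {T. T \<subseteq> B j \<and> card T = t}"
      using fB by (auto intro: finite_subset[rotated, OF finite_Pow_iff[THEN iffD2]])
    show "\<forall>j\<in>J. \<forall>j'\<in>J. j \<noteq> j' \<longrightarrow> {T. T \<subseteq> B j \<and> card T = t} \<inter> {T. T \<subseteq> B j' \<and> card T = t} = {}"
    proof (intro ballI impI)
      fix j j' assume jj: "j \<in> J" "j' \<in> J" "j \<noteq> j'"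
      show "{T. T \<subseteq> B j \<and> card T = t} \<inter> {T. T \<subseteq> B j' \<and> card T = t} = {}"
      proof (rule ccontr)
        assume "{T. T \<subseteq> B j \<and> card T = t} \<inter> {T. T \<subseteq> B j' \<and> card T = t} \<noteq> {}"
        then obtain T where "T \<subseteq> B j" "T \<subseteq> B j'" "card T = t" by auto
        hence "T = {}" using disj[OF jj] by auto
        thus False using \<open>card T = t\<close> s1 assms by simp
      qed
    qed
  qed
  also have "\<dots> = (\<Sum>j\<in>J. card (B j) choose t)"
    by (rule sum.cong) (use fB n_subsets in auto)
  finally have eq: "card (\<Union>j\<in>J. {T. T \<subseteq> B j \<and> card T = t}) = (\<Sum>j\<in>J. card (B j) choose t)" .
  have "(\<Union>j\<in>J. {T. T \<subseteq> B j \<and> card T = t}) \<subseteq> ?K"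
  proof
    fix T assume "T \<in> (\<Union>j\<in>J. {T. T \<subseteq> B j \<and> card T = t})"
    then obtain j where j: "j \<in> J" "T \<subseteq> B j" "card T = t" by auto
    have "finite T" using j fB finite_subset by blast
    moreover have "S \<in> HB" if "S \<subseteq> T" "card S = s" for S
      unfolding HB_def using that j by blast
    ultimately show "T \<in> ?K" using j by blast
  qed
  hence "card (\<Union>j\<in>J. {T. T \<subseteq> B j \<and> card T = t}) \<le> card ?K" by (rule card_mono[OF fK])
  thus ?thesis using eq unfolding kt_def by simp
qed

end


lemma construct:
  assumes "1 \<le> i" "i < s" "s \<le> t" "t \<le> r"
  shows "\<exists>H. is_sgraph s H \<and> card H = m \<and> Delta i H \<le> (r - i) choose (s - i)
           \<and> (m div (r choose s)) * (r choose t) \<le> kt s t H"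
proof -
  define c where "c = r choose s"
  define q where "q = m div c"
  define \<rho> where "\<rho> = m mod c"
  define len where "len j = (if j < q then r else s)" for j
  define Bf where "Bf j = {j * r ..< j * r + len j}" for j
  define J where "J = {0..<q + \<rho>}"
  have lenr: "len j \<le> r" for j using assms unfolding len_def by auto
  have cardB: "card (Bf j) = len j" for j unfolding Bf_def by simp
  have disj: "Bf j \<inter> Bf j' = {}" if "j \<noteq> j'" for j j'
  proof -
    have key: "Bf a \<inter> Bf b = {}" if "a < b" for a b
    proof -
      have "Suc a * r \<le> b * r" using that by (intro mult_le_mono1) simp
      hence "a * r + len a \<le> b * r" using lenr[of a] by simp
      thus ?thesis unfolding Bf_def by auto
    qed
    show ?thesis using that key[of j j'] key[of j' j] by (cases "j < j'") (auto simp: Int_commute)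
  qed
  interpret blocks J Bf r s
    by unfold_locales (use assms lenr cardB disj in \<open>auto simp: J_def Bf_def\<close>)
  have "card HB = (\<Sum>j\<in>J. len j choose s)" using card_HB cardB by simp
  also have "\<dots> = (\<Sum>j\<in>{0..<q}. len j choose s) + (\<Sum>j\<in>{q..<q+\<rho>}. len j choose s)"
    unfolding J_def by (rule sum.atLeastLessThan_concat[symmetric]) simp_all
  also have "\<dots> = (\<Sum>j\<in>{0..<q}. c) + (\<Sum>j\<in>{q..<q+\<rho>}. 1)"
    by (intro arg_cong2[where f="(+)"] sum.cong) (auto simp: len_def c_def)
  also have "\<dots> = m" by (simp add: q_def \<rho>_def)
  finally have cH: "card HB = m" .
  have "q * (r choose t) = (\<Sum>j\<in>{0..<q}. len j choose t)" by (simp add: len_def)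
  also have "\<dots> \<le> (\<Sum>j\<in>J. len j choose t)" unfolding J_def by (rule sum_mono2) auto
  also have "\<dots> \<le> kt s t HB" using kt_HB[OF assms(3)] cardB by simp
  finally have "q * (r choose t) \<le> kt s t HB" .
  moreover have "Delta i HB \<le> (r - i) choose (s - i)" using Delta_HB assms by simp
  ultimately show ?thesis using HB_sgraph cH unfolding q_def c_def by blast
qed

lemma Mmax_bounds:
  assumes "1 \<le> i" "i < s" "s \<le> t" "t \<le> r"
  shows "(m div (r choose s)) * (r choose t) \<le> Mmax i s t r m"
    and "Mmax i s t r m * (r choose s) \<le> m * (r choose t)"
proof -
  let ?A = "{kt s t H | H. is_sgraph s H \<and> card H = m \<and> Delta i H \<le> (r - i) choose (s - i)}"
  have cpos: "0 < r choose s" using assms by simp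
  have ub: "k * (r choose s) \<le> m * (r choose t)" if "k \<in> ?A" for k
    using that upper[OF assms] by auto
  have "?A \<subseteq> {0..m * (r choose t)}"
  proof
    fix k assume "k \<in> ?A"
    hence "k * (r choose s) \<le> m * (r choose t)" by (rule ub)
    moreover have "k * 1 \<le> k * (r choose s)" using cpos by (intro mult_le_mono2) linarith
    ultimately have "k \<le> m * (r choose t)" by linarith
    thus "k \<in> {0..m * (r choose t)}" by simp
  qed
  hence fin: "finite ?A" using finite_subset by blast
  obtain H where H: "is_sgraph s H" "card H = m" "Delta i H \<le> (r - i) choose (s - i)"
    "(m div (r choose s)) * (r choose t) \<le> kt s t H" using construct[OF assms] by blast
  have inA: "kt s t H \<in> ?A" using H by blast
  hence ne: "?A \<noteq> {}" by blast
  have "kt s t H \<le> Max ?A" using fin inA by (rule Max_ge)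
  thus "(m div (r choose s)) * (r choose t) \<le> Mmax i s t r m" unfolding Mmax_def using H(4) by simp
  have "Max ?A \<in> ?A" using fin ne by (rule Max_in)
  thus "Mmax i s t r m * (r choose s) \<le> m * (r choose t)" unfolding Mmax_def by (rule ub)
qed


theorem mainTheorem18:
  fixes i s t r :: nat
  assumes "1 \<le> i" "i < s" "s \<le> t" "t \<le> r"
  shows "(\<lambda>m. real (Mmax i s t r m)) \<sim>[at_top]
         (\<lambda>m. real m * (real (r choose t) / real (r choose s)))"
proof (rule asymp_equivI')
  define a where "a = real (r choose t)"
  define c where "c = real (r choose s)"
  have apos: "a > 0" "c > 0" using assms unfolding a_def c_def by auto
  define R where "R m = real (Mmax i s t r m) / (real m * (a / c))" for m
  have up: "R m \<le> 1" if "m \<ge> 1" for m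
  proof -
    have "real (Mmax i s t r m * (r choose s)) \<le> real (m * (r choose t))"
      using Mmax_bounds(2)[OF assms] by (simp only: of_nat_le_iff)
    hence h: "real (Mmax i s t r m) * c \<le> real m * a" unfolding a_def c_def by simp
    have "real m * (a / c) > 0" using that apos by simp
    thus ?thesis unfolding R_def using h apos by (simp add: field_simps)
  qed
  have low: "1 - c / real m \<le> R m" if "m \<ge> 1" for m
  proof -
    define q where "q = m div (r choose s)"
    have "real (q * (r choose t)) \<le> real (Mmax i s t r m)"
      using Mmax_bounds(1)[OF assms] unfolding q_def by (simp only: of_nat_le_iff)
    hence h1: "real q * a \<le> real (Mmax i s t r m)" unfolding a_def by simp
    have "m = q * (r choose s) + m mod (r choose s)" unfolding q_def by (rule div_mult_mod_eq[symmetric])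
    moreover have "m mod (r choose s) < r choose s" using assms by simp
    ultimately have "m < q * (r choose s) + (r choose s)" by linarith
    hence "real m < real (q * (r choose s) + (r choose s))" by (simp only: of_nat_less_iff)
    hence h2: "real m - c \<le> real q * c" unfolding c_def by simp
    have mpos: "real m > 0" using that by simp
    have "(real m - c) * a \<le> real q * c * a" using h2 apos by (simp add: mult_right_mono)
    also have "\<dots> \<le> real (Mmax i s t r m) * c" using h1 apos by (simp add: mult.commute mult_left_mono)
    finally have h3: "(real m - c) * a \<le> real (Mmax i s t r m) * c" .
    have e1: "1 - c / real m = ((real m - c) * a) / (real m * a)" using mpos apos by (simp add: field_simps)
    have e2: "R m = (real (Mmax i s t r m) * c) / (real m * a)" unfolding R_def using mpos apos by (simp add: field_simps)
    have "((real m - c) * a) / (real m * a) \<le> (real (Mmax i s t r m) * c) / (real m * a)"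
      by (rule divide_right_mono[OF h3]) (use mpos apos in simp)
    thus ?thesis using e1 e2 by simp
  qed
  have "R \<longlonglongrightarrow> 1"
  proof (rule tendsto_sandwich[of "\<lambda>m. 1 - c / real m" _ _ "\<lambda>_. 1"])
    show "\<forall>\<^sub>F m in sequentially. 1 - c / real m \<le> R m"
      using eventually_ge_at_top[of 1] by eventually_elim (rule low)
    show "\<forall>\<^sub>F m in sequentially. R m \<le> 1"
      using eventually_ge_at_top[of 1] by eventually_elim (rule up)
    show "(\<lambda>m. 1 - c / real m) \<longlonglongrightarrow> 1"
      using tendsto_diff[OF tendsto_const lim_const_over_n[of c]] by simp
  qed simp
  thus "((\<lambda>m. real (Mmax i s t r m) / (real m * (real (r choose t) / real (r choose s)))) \<longlongrightarrow> 1) at_top"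
    unfolding R_def a_def c_def by simp
qed

end
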